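(* In the setting of the context, for each $j\in[N]$ one has $p_j\le\frac{\bar M-1}{\bar M}\,p_j$ (hence $p_j=0$).
   Context: Standing setting: $\Gamma$ countably infinite, $n\in\mathbb N$, $\mathbb Z\Gamma$ the integral group ring (product $(fg)_t=\sum_sf_{ts^{-1}}g_s$, involution $(f^* )_s=f_{s^{-1}}$, $(f^* )^{(km)}=(f^{(mk)})^*$). $f=M-g\in M_n(\mathbb Z\Gamma)$, $M=\mathrm{diag}(M_1,\dots,M_n)$ positive integers, $M_k>\sum_m\|g^{(km)}\|_1$ for all $k$, and a subsemigroup $P\subseteq\Gamma\setminus\{e_\Gamma\}$ containing all $\mathrm{supp}(g^{(km)})$; $f$ is invertible in $M_n(\ell^1_{\mathbb R}(\Gamma))$. $\bar P=P\cup\{e_\Gamma\}$, $\bar M=\max_kM_k$, $S_f=\prod_k\{0,\dots,M_k-1\}$, $Y=S_f^\Gamma$ (row vectors with entries $y_{s,k}$, $(yF)_m=\sum_ky_kF^{(km)}$ by convolution). $\nu$ is a probability measure on $S_f$ whose marginal on each factor $\{0,\dots,M_k-1\}$ is uniform; for $E\subseteq\Gamma$, $\nu^E$ is the product measure on $S_f^E$ and $\pi_E$ the restriction $S_f^\Gamma\to S_f^E$. $N$ is a fixed integer $\ge\bar M\|(f^* )^{-1}\|_{1,\infty}$ ($\|F\|_{1,\infty}=\max_m\sum_k\|F^{(km)}\|_1$), $[N]=\{1,\dots,N\}$, $V=(\{-N,\dots,N\}^\Gamma)^n\setminus\{0\}$, $Z=\{(y,c)\in Y\times V:y+cf^*\in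 Y\}$, $\varphi:Y\times V\to Y$ the projection. $Z^+_{j,s,k}=\{(y,c)\in Z:\max_{t,m}|c_{t,m}|=c_{s,k}=j\}$, $Z^-_{j,s,k}=\{(y,c)\in Z:\max_{t,m}|c_{t,m}|=-c_{s,k}=j\}$; the sets $\varphi(Z^\pm_{j,s,k})$ are closed. The quantity $\nu^{s\bar P}(\pi_{s\bar P}\varphi(Z^\dagger_{j,s,k}))$ does not depend on $s\in\Gamma$, and $p_j:=\max_{k\in[n],\dagger\in\{+,-\}}\nu^{s\bar P}(\pi_{s\bar P}\varphi(Z^\dagger_{j,s,k}))$ for any $s\in\Gamma$. *)

theory Defs
  imports "HOL-Analysis.Analysis" "HOL-Probability.Probability"
begin

text \<open>Group elements: type class group_add, written additively (so t s^-1 is t - s, e is 0).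
Matrix indices range over {1..n}.  Elements of the group ring are functions 'g => int
with finite support.\<close>

definition supp :: "('g \<Rightarrow> 'a::zero) \<Rightarrow> 'g set" where
  "supp a = {s. a s \<noteq> 0}"

definition l1_int :: "('g \<Rightarrow> int) \<Rightarrow> int" where
  "l1_int a = (\<Sum>s\<in>supp a. \<bar>a s\<bar>)"

definition conv :: "('g::group_add \<Rightarrow> 'a::{comm_ring_1,topological_comm_monoid_add,t2_space})
    \<Rightarrow> ('g \<Rightarrow> 'a) \<Rightarrow> 'g \<Rightarrow> 'a" where
  "conv a b t = (\<Sum>\<^sub>\<infinity>s. a (t - s) * b s)"

definition fmat :: "(nat \<Rightarrow> nat) \<Rightarrow> (nat \<Rightarrow> nat \<Rightarrow> 'g::group_add \<Rightarrow> int)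
    \<Rightarrow> nat \<Rightarrow> nat \<Rightarrow> 'g \<Rightarrow> int" where
  "fmat M g k m = (\<lambda>s. (if k = m \<and> s = 0 then int (M k) else 0) - g k m s)"

definition mstar :: "(nat \<Rightarrow> nat \<Rightarrow> 'g::group_add \<Rightarrow> 'a) \<Rightarrow> nat \<Rightarrow> nat \<Rightarrow> 'g \<Rightarrow> 'a" where
  "mstar A k m = (\<lambda>s. A m k (- s))"

definition is_l1_inverse :: "nat \<Rightarrow> (nat \<Rightarrow> nat \<Rightarrow> 'g::group_add \<Rightarrow> real)
    \<Rightarrow> (nat \<Rightarrow> nat \<Rightarrow> 'g \<Rightarrow> int) \<Rightarrow> bool" where
  "is_l1_inverse n F A \<longleftrightarrow>
     (\<forall>k\<in>{1..n}. \<forall>m\<in>{1..n}. ((\<lambda>s. \<bar>F k m s\<bar>) summable_on UNIV)) \<and>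
     (\<forall>k\<in>{1..n}. \<forall>m\<in>{1..n}. \<forall>t.
        (\<Sum>l\<in>{1..n}. conv (\<lambda>s. real_of_int (A k l s)) (F l m) t)
          = (if k = m \<and> t = 0 then 1 else 0)) \<and>
     (\<forall>k\<in>{1..n}. \<forall>m\<in>{1..n}. \<forall>t.
        (\<Sum>l\<in>{1..n}. conv (F k l) (\<lambda>s. real_of_int (A l m s)) t)
          = (if k = m \<and> t = 0 then 1 else 0))"

definition norm_1inf :: "nat \<Rightarrow> (nat \<Rightarrow> nat \<Rightarrow> 'g \<Rightarrow> real) \<Rightarrow> real" where
  "norm_1inf n F = Max {(\<Sum>k\<in>{1..n}. (\<Sum>\<^sub>\<infinity>s. \<bar>F k m s\<bar>)) | m. m \<in> {1..n}}"

definition Sf :: "nat \<Rightarrow> (nat \<Rightarrow> nat) \<Rightarrow> (nat \<Rightarrow> int) set" where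
  "Sf n M = PiE {1..n} (\<lambda>k. {0..<int (M k)})"

definition Yset :: "nat \<Rightarrow> (nat \<Rightarrow> nat) \<Rightarrow> ('g \<Rightarrow> nat \<Rightarrow> int) set" where
  "Yset n M = {y. \<forall>s. y s \<in> Sf n M}"

definition Vset :: "nat \<Rightarrow> nat \<Rightarrow> ('g \<Rightarrow> nat \<Rightarrow> int) set" where
  "Vset n N = {c. (\<forall>s. c s \<in> PiE {1..n} (\<lambda>_. {- int N..int N})) \<and>
                  (\<exists>s. \<exists>k\<in>{1..n}. c s k \<noteq> 0)}"

definition shift_act :: "nat \<Rightarrow> (nat \<Rightarrow> nat \<Rightarrow> 'g::group_add \<Rightarrow> int)
    \<Rightarrow> ('g \<Rightarrow> nat \<Rightarrow> int) \<Rightarrow> ('g \<Rightarrow> nat \<Rightarrow> int) \<Rightarrow> 'g \<Rightarrow> nat \<Rightarrow> int" where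
  "shift_act n F y c = (\<lambda>s. \<lambda>m\<in>{1..n}. y s m + (\<Sum>k\<in>{1..n}. conv (\<lambda>t. c t k) (F k m) s))"

definition Zset :: "nat \<Rightarrow> (nat \<Rightarrow> nat) \<Rightarrow> nat \<Rightarrow> (nat \<Rightarrow> nat \<Rightarrow> 'g::group_add \<Rightarrow> int)
    \<Rightarrow> (('g \<Rightarrow> nat \<Rightarrow> int) \<times> ('g \<Rightarrow> nat \<Rightarrow> int)) set" where
  "Zset n M N f = {(y, c). y \<in> Yset n M \<and> c \<in> Vset n N \<and> shift_act n (mstar f) y c \<in> Yset n M}"

definition cmax :: "nat \<Rightarrow> ('g \<Rightarrow> nat \<Rightarrow> int) \<Rightarrow> int" where
  "cmax n c = Max {\<bar>c t m\<bar> | t m. m \<in> {1..n}}"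

definition Zplus :: "nat \<Rightarrow> (nat \<Rightarrow> nat) \<Rightarrow> nat \<Rightarrow> (nat \<Rightarrow> nat \<Rightarrow> 'g::group_add \<Rightarrow> int)
    \<Rightarrow> nat \<Rightarrow> 'g \<Rightarrow> nat \<Rightarrow> (('g \<Rightarrow> nat \<Rightarrow> int) \<times> ('g \<Rightarrow> nat \<Rightarrow> int)) set" where
  "Zplus n M N f j s k = {(y, c) \<in> Zset n M N f. cmax n c = int j \<and> c s k = int j}"

definition Zminus :: "nat \<Rightarrow> (nat \<Rightarrow> nat) \<Rightarrow> nat \<Rightarrow> (nat \<Rightarrow> nat \<Rightarrow> 'g::group_add \<Rightarrow> int)
    \<Rightarrow> nat \<Rightarrow> 'g \<Rightarrow> nat \<Rightarrow> (('g \<Rightarrow> nat \<Rightarrow> int) \<times> ('g \<Rightarrow> nat \<Rightarrow> int)) set" where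
  "Zminus n M N f j s k = {(y, c) \<in> Zset n M N f. cmax n c = int j \<and> - c s k = int j}"

definition sPbar :: "'g::group_add \<Rightarrow> 'g set \<Rightarrow> 'g set" where
  "sPbar s P = (\<lambda>p. s + p) ` insert 0 P"

definition nuE :: "(nat \<Rightarrow> int) pmf \<Rightarrow> 'g set \<Rightarrow> ('g \<Rightarrow> nat \<Rightarrow> int) measure" where
  "nuE \<nu> E = PiM E (\<lambda>_. measure_pmf \<nu>)"

definition projmeas :: "(nat \<Rightarrow> int) pmf \<Rightarrow> 'g set \<Rightarrow>
    (('g \<Rightarrow> nat \<Rightarrow> int) \<times> ('g \<Rightarrow> nat \<Rightarrow> int)) set \<Rightarrow> real" where
  "projmeas \<nu> E Z = measure (nuE \<nu> E) ((\<lambda>y. restrict y E) ` (fst ` Z))"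

definition pj :: "nat \<Rightarrow> (nat \<Rightarrow> nat) \<Rightarrow> nat \<Rightarrow> (nat \<Rightarrow> nat \<Rightarrow> 'g::group_add \<Rightarrow> int)
    \<Rightarrow> 'g set \<Rightarrow> (nat \<Rightarrow> int) pmf \<Rightarrow> nat \<Rightarrow> 'g \<Rightarrow> real" where
  "pj n M N f P \<nu> j s = Max ({projmeas \<nu> (sPbar s P) (Zplus n M N f j s k) | k. k \<in> {1..n}}
                       \<union> {projmeas \<nu> (sPbar s P) (Zminus n M N f j s k) | k. k \<in> {1..n}})"

end

theory Submission
  imports Defs
begin


definition Exv :: "(nat \<Rightarrow> int) pmf \<Rightarrow> (nat \<Rightarrow> int) set \<Rightarrow> 'g set \<Rightarrow> (('g \<Rightarrow> nat \<Rightarrow> int) \<Rightarrow> real) \<Rightarrow> real" where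
  "Exv \<nu> S J h = (\<Sum>x\<in>PiE J (\<lambda>_. S). h x * (\<Prod>i\<in>J. pmf \<nu> (x i)))"

lemma Ex_insert:
  assumes "finite J" "s \<notin> J"
  shows "Exv \<nu> S (insert s J) h = Exv \<nu> S J (\<lambda>w. \<Sum>a\<in>S. pmf \<nu> a * h (w(s:=a)))"
proof -
  have "Exv \<nu> S (insert s J) h = (\<Sum>x\<in>(\<lambda>(y, g). g(s := y)) ` (S \<times> PiE J (\<lambda>_. S)). h x * (\<Prod>i\<in>insert s J. pmf \<nu> (x i)))"
    unfolding Exv_def PiE_insert_eq ..
  also have "\<dots> = (\<Sum>(a,w)\<in>S \<times> PiE J (\<lambda>_. S). h (w(s:=a)) * (\<Prod>i\<in>insert s J. pmf \<nu> ((w(s:=a)) i)))"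
    by (subst sum.reindex[OF inj_combinator[OF assms(2)]]) (simp add: case_prod_unfold)
  also have "\<dots> = (\<Sum>(a,w)\<in>S \<times> PiE J (\<lambda>_. S). h (w(s:=a)) * (pmf \<nu> a * (\<Prod>i\<in>J. pmf \<nu> (w i))))"
  proof (intro sum.cong refl, clarify)
    fix a w assume "a \<in> S" "w \<in> PiE J (\<lambda>_. S)"
    have "(\<Prod>i\<in>J. pmf \<nu> ((w(s:=a)) i)) = (\<Prod>i\<in>J. pmf \<nu> (w i))"
      using assms by (intro prod.cong) auto
    then show "h (w(s:=a)) * (\<Prod>i\<in>insert s J. pmf \<nu> ((w(s:=a)) i)) = h (w(s:=a)) * (pmf \<nu> a * (\<Prod>i\<in>J. pmf \<nu> (w i)))"
      using assms by (simp add: prod.insert)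
  qed
  also have "\<dots> = (\<Sum>a\<in>S. \<Sum>w\<in>PiE J (\<lambda>_. S). h (w(s:=a)) * (pmf \<nu> a * (\<Prod>i\<in>J. pmf \<nu> (w i))))"
    by (simp add: sum.cartesian_product)
  also have "\<dots> = (\<Sum>w\<in>PiE J (\<lambda>_. S). \<Sum>a\<in>S. h (w(s:=a)) * (pmf \<nu> a * (\<Prod>i\<in>J. pmf \<nu> (w i))))"
    by (rule sum.swap)
  also have "\<dots> = Exv \<nu> S J (\<lambda>w. \<Sum>a\<in>S. pmf \<nu> a * h (w(s:=a)))"
    unfolding Exv_def by (intro sum.cong refl) (simp add: sum_distrib_left mult_ac)
  finally show ?thesis .
qed

lemma Ex_mono:
  assumes "\<And>x. x \<in> PiE J (\<lambda>_. S) \<Longrightarrow> h x \<le> h' x"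
  shows "Exv \<nu> S J h \<le> Exv \<nu> S J h'"
  unfolding Exv_def
  by (intro sum_mono mult_right_mono assms prod_nonneg) auto

lemma Ex_cmult: "Exv \<nu> S J (\<lambda>x. c * h x) = c * Exv \<nu> S J h"
  unfolding Exv_def by (simp add: sum_distrib_left mult_ac)

lemma Ex_sum: "Exv \<nu> S J (\<lambda>x. \<Sum>i\<in>I. h i x) = (\<Sum>i\<in>I. Exv \<nu> S J (h i))"
  unfolding Exv_def by (simp add: sum_distrib_right sum.swap[of _ I])

lemma Ex_marg_aux:
  assumes "finite D" "finite J0" "D \<inter> J0 = {}" "finite S" "set_pmf \<nu> \<subseteq> S"
    and dep: "\<And>x x'. (\<forall>i\<in>J0. x i = x' i) \<Longrightarrow> h x = h x'"
  shows "Exv \<nu> S (J0 \<union> D) h = Exv \<nu> S J0 h"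
  using assms(1,3)
proof (induction D rule: finite_induct)
  case empty then show ?case by simp
next
  case (insert t D)
  have "Exv \<nu> S (J0 \<union> insert t D) h = Exv \<nu> S (insert t (J0 \<union> D)) h" by simp
  also have "\<dots> = Exv \<nu> S (J0 \<union> D) (\<lambda>w. \<Sum>a\<in>S. pmf \<nu> a * h (w(t:=a)))"
    using insert assms by (intro Ex_insert) auto
  also have "\<dots> = Exv \<nu> S (J0 \<union> D) (\<lambda>w. h w)"
  proof -
    have "(\<lambda>w. \<Sum>a\<in>S. pmf \<nu> a * h (w(t:=a))) = (\<lambda>w. h w)"
    proof
      fix w
      have "(\<Sum>a\<in>S. pmf \<nu> a * h (w(t:=a))) = (\<Sum>a\<in>S. pmf \<nu> a * h w)"
        using insert.prems by (intro sum.cong refl) (subst dep[of "w(t:=_)" w], auto)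
      also have "\<dots> = h w" using sum_pmf_eq_1[OF assms(4,5)] by (simp add: sum_distrib_right[symmetric])
      finally show "(\<Sum>a\<in>S. pmf \<nu> a * h (w(t:=a))) = h w" .
    qed
    then show ?thesis by simp
  qed
  also have "\<dots> = Exv \<nu> S J0 h" using insert by auto
  finally show ?case .
qed

lemma Ex_marg:
  assumes "finite J" "J0 \<subseteq> J" "finite S" "set_pmf \<nu> \<subseteq> S"
    and dep: "\<And>x x'. (\<forall>i\<in>J0. x i = x' i) \<Longrightarrow> h x = h x'"
  shows "Exv \<nu> S J h = Exv \<nu> S J0 h"
proof -
  have "J = J0 \<union> (J - J0)" using assms by auto
  then show ?thesis
    using Ex_marg_aux[of "J - J0" J0 S \<nu> h] assms finite_subset[OF assms(2,1)] by auto
qed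


lemma term_bound:
  fixes e gg j \<sigma> :: int
  assumes "\<bar>e\<bar> \<le> j" "\<sigma> = 1 \<or> \<sigma> = -1"
  shows "\<sigma> * (e * gg) \<le> (j - 1) * \<bar>gg\<bar> + \<bar>gg\<bar> * of_bool (e = \<sigma> * sgn gg * j)"
proof -
  consider "gg > 0" | "gg = 0" | "gg < 0" by linarith
  then show ?thesis
  proof cases
    case 1
    then have sg: "sgn gg = 1" "\<bar>gg\<bar> = gg" by auto
    define d where "d = \<sigma> * e"
    have ed: "e = \<sigma> * j \<longleftrightarrow> d = j" using assms(2) unfolding d_def by auto
    have "d \<le> j" using assms unfolding d_def by auto
    then have d: "d \<le> j - 1 + of_bool (d = j)" by auto
    have "\<sigma> * (e * gg) = gg * d" unfolding d_def by (simp add: mult_ac)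
    also have "\<dots> \<le> gg * (j - 1 + of_bool (d = j))" using 1 d by (intro mult_left_mono) auto
    finally show ?thesis using sg ed by (simp add: algebra_simps)
  next
    case 2 then show ?thesis by simp
  next
    case 3
    then have sg: "sgn gg = -1" "\<bar>gg\<bar> = - gg" by auto
    define d where "d = - \<sigma> * e"
    have ed: "e = - \<sigma> * j \<longleftrightarrow> d = j" using assms(2) unfolding d_def by auto
    have "d \<le> j" using assms unfolding d_def by auto
    then have d: "d \<le> j - 1 + of_bool (d = j)" by auto
    have "\<sigma> * (e * gg) = (- gg) * d" unfolding d_def by (simp add: mult_ac)
    also have "\<dots> \<le> (- gg) * (j - 1 + of_bool (d = j))" using 3 d by (intro mult_left_mono) auto
    finally show ?thesis using sg ed by (simp add: algebra_simps)
  qed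
qed



lemma marg_bound:
  fixes \<nu> :: "(nat \<Rightarrow> int) pmf" and S :: "(nat \<Rightarrow> int) set" and Mk :: nat and h :: int
  assumes S: "finite S" "set_pmf \<nu> \<subseteq> S"
    and marg: "map_pmf (\<lambda>a. a k) \<nu> = pmf_of_set {0..<int Mk}"
    and Mk: "Mk > 0" and h: "h \<ge> 0"
    and Pb: "(\<forall>x. Pr x \<longleftrightarrow> x < h) \<or> (\<forall>x. Pr x \<longleftrightarrow> int Mk - 1 - x < h)"
  shows "(\<Sum>a\<in>S. pmf \<nu> a * of_bool (Pr (a k))) \<le> real_of_int h / real Mk"
proof -
  have "(\<Sum>a\<in>S. pmf \<nu> a * of_bool (Pr (a k))) = (\<Sum>a\<in>{a\<in>S. Pr (a k)}. pmf \<nu> a)"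
    using S by (simp add: sum.inter_filter[symmetric] of_bool_def if_distrib cong: if_cong)
  also have "\<dots> = measure (measure_pmf \<nu>) {a\<in>S. Pr (a k)}"
    using S by (simp add: measure_measure_pmf_finite)
  also have "{a\<in>S. Pr (a k)} = {a. Pr (a k)} \<inter> S" by auto
  also have "measure (measure_pmf \<nu>) \<dots> = measure (measure_pmf \<nu>) {a. Pr (a k)}"
  proof -
    have "{a. Pr (a k)} \<inter> S \<inter> set_pmf \<nu> = {a. Pr (a k)} \<inter> set_pmf \<nu>" using S by auto
    then show ?thesis by (metis measure_Int_set_pmf)
  qed
  also have "\<dots> = measure (measure_pmf (map_pmf (\<lambda>a. a k) \<nu>)) {x. Pr x}"
    by simp
  also have "\<dots> = card ({0..<int Mk} \<inter> {x. Pr x}) / card {0..<int Mk}"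
    unfolding marg using Mk by (subst measure_pmf_of_set) auto
  also have "\<dots> \<le> real_of_int h / real Mk"
  proof -
    have "card ({0..<int Mk} \<inter> {x. Pr x}) \<le> nat h"
      using Pb
    proof
      assume "\<forall>x. Pr x \<longleftrightarrow> x < h"
      then have "{0..<int Mk} \<inter> {x. Pr x} \<subseteq> {0..<h}" by (intro subsetI) simp
      then have "card ({0..<int Mk} \<inter> {x. Pr x}) \<le> card {0..<h}"
        by (intro card_mono) auto
      then show ?thesis by simp
    next
      assume "\<forall>x. Pr x \<longleftrightarrow> int Mk - 1 - x < h"
      then have "{0..<int Mk} \<inter> {x. Pr x} \<subseteq> {int Mk - h..<int Mk}" by (intro subsetI) simp
      then have "card ({0..<int Mk} \<inter> {x. Pr x}) \<le> card {int Mk - h..<int Mk}"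
        by (intro card_mono) auto
      then show ?thesis by simp
    qed
    then have "real (card ({0..<int Mk} \<inter> {x. Pr x})) \<le> real_of_int h"
      using h by linarith
    then show ?thesis using Mk by (simp add: divide_right_mono)
  qed
  finally show ?thesis .
qed



fun Tset :: "'g::group_add set \<Rightarrow> nat \<Rightarrow> 'g \<Rightarrow> 'g set" where
  "Tset U 0 t = {}"
| "Tset U (Suc L) t = insert t (\<Union>u\<in>U. Tset U L (t + u))"

lemma Tset_finite: "finite U \<Longrightarrow> finite (Tset U L t)"
  by (induction L arbitrary: t) auto

lemma Tset_sub:
  assumes "U \<subseteq> P" "\<forall>a\<in>P. \<forall>b\<in>P. a + b \<in> P"
  shows "Tset U L t \<subseteq> insert t ((+) t ` P)"
proof (induction L arbitrary: t)
  case 0 then show ?case by simp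
next
  case (Suc L)
  show ?case
  proof
    fix x assume "x \<in> Tset U (Suc L) t"
    then have "x = t \<or> (\<exists>u\<in>U. x \<in> Tset U L (t + u))" by simp
    then show "x \<in> insert t ((+) t ` P)"
    proof
      assume "x = t" then show ?thesis by simp
    next
      assume "\<exists>u\<in>U. x \<in> Tset U L (t + u)"
      then obtain u where u: "u \<in> U" "x \<in> Tset U L (t + u)" by blast
      have "x \<in> insert (t + u) ((+) (t + u) ` P)" using Suc.IH[of "t + u"] u(2) by blast
      then have "x = t + u \<or> (\<exists>q\<in>P. x = t + u + q)" by blast
      then show ?thesis
      proof
        assume "x = t + u" then show ?thesis using u assms by auto
      next
        assume "\<exists>q\<in>P. x = t + u + q"
        then obtain q where q: "q \<in> P" "x = t + u + q" by blast
        have "x = t + (u + q)" using q by (simp add: add.assoc)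
        moreover have "u + q \<in> P" using assms u q by blast
        ultimately show ?thesis by blast
      qed
    qed
  qed
qed

lemma Tset_notin:
  assumes "U \<subseteq> P" "\<forall>a\<in>P. \<forall>b\<in>P. a + b \<in> P" "0 \<notin> P"
  shows "s \<notin> (\<Union>u\<in>U. Tset U L (s + u))"
proof
  assume "s \<in> (\<Union>u\<in>U. Tset U L (s + u))"
  then obtain u where u: "u \<in> U" "s \<in> Tset U L (s + u)" by blast
  then have "s \<in> insert (s + u) ((+) (s + u) ` P)" using Tset_sub[OF assms(1,2), of L "s + u"] by blast
  then have "s = s + u \<or> (\<exists>q\<in>P. s = s + u + q)" by blast
  then show False
  proof
    assume "s = s + u" then have "s + 0 = s + u" by simp
    then have "u = 0" by (simp only: add_left_cancel)
    then show False using u assms by blast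
  next
    assume "\<exists>q\<in>P. s = s + u + q"
    then obtain q where q: "q \<in> P" "s = s + u + q" by blast
    then have "s + 0 = s + (u + q)" by (simp add: add.assoc)
    then have "0 = u + q" by (simp only: add_left_cancel)
    moreover have "u + q \<in> P" using assms q u by blast
    ultimately show False using assms by simp
  qed
qed

definition okAt :: "nat \<Rightarrow> (nat \<Rightarrow> nat) \<Rightarrow> (nat \<Rightarrow> nat \<Rightarrow> 'g::group_add \<Rightarrow> int)
    \<Rightarrow> ('g \<Rightarrow> nat \<Rightarrow> int) \<Rightarrow> ('g \<Rightarrow> nat \<Rightarrow> int) \<Rightarrow> 'g \<Rightarrow> bool" where
  "okAt n M F y c t \<longleftrightarrow> (\<forall>m\<in>{1..n}. 0 \<le> y t m \<and> y t m < int (M m)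
      \<and> 0 \<le> y t m + (\<Sum>k\<in>{1..n}. conv (\<lambda>r. c r k) (F k m) t)
      \<and> y t m + (\<Sum>k\<in>{1..n}. conv (\<lambda>r. c r k) (F k m) t) < int (M m))"

definition Bev :: "nat \<Rightarrow> (nat \<Rightarrow> nat) \<Rightarrow> (nat \<Rightarrow> nat \<Rightarrow> 'g::group_add \<Rightarrow> int) \<Rightarrow> 'g set
    \<Rightarrow> nat \<Rightarrow> nat \<Rightarrow> 'g \<Rightarrow> nat \<Rightarrow> int \<Rightarrow> ('g \<Rightarrow> nat \<Rightarrow> int) set" where
  "Bev n M F U j L s k \<sigma> = {y. \<exists>c. (\<forall>t. \<forall>m\<in>{1..n}. \<bar>c t m\<bar> \<le> int j) \<and> c s k = \<sigma> * int j
      \<and> (\<forall>t\<in>Tset U L s. okAt n M F y c t)}"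

lemma Bev_dep:
  assumes "\<forall>t\<in>Tset U L s. y t = y' t"
  shows "y \<in> Bev n M F U j L s k \<sigma> \<longleftrightarrow> y' \<in> Bev n M F U j L s k \<sigma>"
proof -
  have "\<And>c. (\<forall>t\<in>Tset U L s. okAt n M F y c t) \<longleftrightarrow> (\<forall>t\<in>Tset U L s. okAt n M F y' c t)"
    using assms by (simp add: okAt_def)
  then show ?thesis unfolding Bev_def by simp
qed

lemma conv_f:
  fixes g :: "nat \<Rightarrow> nat \<Rightarrow> 'g::group_add \<Rightarrow> int"
  assumes fin: "finite (supp (g k m))" and z: "0 \<notin> supp (g k m)"
  shows "conv (\<lambda>r. c r m) (mstar (fmat M g) m k) s
     = (if k = m then int (M k) * c s m else 0) - (\<Sum>u\<in>supp (g k m). c (s + u) m * g k m u)"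
proof -
  define V where "V = supp (g k m)"
  define S where "S = uminus ` insert 0 V"
  have fS: "finite S" using fin by (simp add: S_def V_def)
  have g0: "\<And>u. u \<notin> V \<Longrightarrow> g k m u = 0" by (simp add: V_def supp_def)
  have "conv (\<lambda>r. c r m) (mstar (fmat M g) m k) s = (\<Sum>\<^sub>\<infinity>r\<in>S. c (s - r) m * mstar (fmat M g) m k r)"
    unfolding conv_def
  proof (rule infsum_cong_neutral)
    fix r assume "r \<in> UNIV - S"
    then have "- r \<notin> insert 0 V" unfolding S_def by (metis DiffD2 image_eqI minus_minus)
    then show "c (s - r) m * mstar (fmat M g) m k r = 0"
      using g0 by (auto simp: mstar_def fmat_def)
  qed auto
  also have "\<dots> = (\<Sum>r\<in>S. c (s - r) m * mstar (fmat M g) m k r)" using fS by simp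
  also have "\<dots> = (\<Sum>u\<in>insert 0 V. c (s - - u) m * mstar (fmat M g) m k (- u))"
    unfolding S_def by (subst sum.reindex) (auto simp: inj_on_def)
  also have "\<dots> = (\<Sum>u\<in>insert 0 V. c (s + u) m * ((if k = m \<and> u = 0 then int (M k) else 0) - g k m u))"
    by (simp add: mstar_def fmat_def)
  also have "\<dots> = c s m * ((if k = m then int (M k) else 0) - g k m 0)
       + (\<Sum>u\<in>V. c (s + u) m * ((if k = m \<and> u = 0 then int (M k) else 0) - g k m u))"
    using fin z by (simp add: V_def)
  also have "(\<Sum>u\<in>V. c (s + u) m * ((if k = m \<and> u = 0 then int (M k) else 0) - g k m u))
      = (\<Sum>u\<in>V. - (c (s + u) m * g k m u))"
    using z by (intro sum.cong refl) (auto simp: V_def)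
  also have "g k m 0 = 0" using g0 z V_def by auto
  finally show ?thesis by (simp add: V_def sum_negf)
qed

lemma conv_sum:
  fixes g :: "nat \<Rightarrow> nat \<Rightarrow> 'g::group_add \<Rightarrow> int"
  assumes "k \<in> {1..n}" "\<forall>m\<in>{1..n}. finite (supp (g k m)) \<and> 0 \<notin> supp (g k m)"
  shows "(\<Sum>m\<in>{1..n}. conv (\<lambda>r. c r m) (mstar (fmat M g) m k) s)
     = int (M k) * c s k - (\<Sum>m\<in>{1..n}. \<Sum>u\<in>supp (g k m). c (s + u) m * g k m u)"
proof -
  have "(\<Sum>m\<in>{1..n}. conv (\<lambda>r. c r m) (mstar (fmat M g) m k) s)
     = (\<Sum>m\<in>{1..n}. (if k = m then int (M k) * c s m else 0) - (\<Sum>u\<in>supp (g k m). c (s + u) m * g k m u))"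
    using assms by (intro sum.cong refl conv_f) auto
  also have "\<dots> = int (M k) * c s k - (\<Sum>m\<in>{1..n}. \<Sum>u\<in>supp (g k m). c (s + u) m * g k m u)"
    using assms(1) by (simp add: sum_subtractf)
  finally show ?thesis .
qed



lemma step_ineq:
  fixes g :: "nat \<Rightarrow> nat \<Rightarrow> 'g::group_add \<Rightarrow> int"
  assumes j: "j \<ge> 1" and sig: "\<sigma> = 1 \<or> \<sigma> = -1"
    and cb: "\<forall>t. \<forall>m\<in>{1..n}. \<bar>c t m\<bar> \<le> int j" and cs: "c s k = \<sigma> * int j"
    and ok: "okAt n M (mstar (fmat M g)) y c s" and k: "k \<in> {1..n}"
    and gf: "\<forall>m\<in>{1..n}. finite (supp (g k m)) \<and> 0 \<notin> supp (g k m)"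
    and G: "(\<Sum>m\<in>{1..n}. l1_int (g k m)) < int (M k)"
  shows "(if \<sigma> = 1 then y s k else int (M k) - 1 - y s k)
     < (\<Sum>m\<in>{1..n}. \<Sum>u\<in>supp (g k m). \<bar>g k m u\<bar> * of_bool (c (s + u) m = \<sigma> * sgn (g k m u) * int j))"
    (is "?z < ?H")
proof -
  define X where "X = (\<Sum>m\<in>{1..n}. \<Sum>u\<in>supp (g k m). c (s + u) m * g k m u)"
  define Gk where "Gk = (\<Sum>m\<in>{1..n}. \<Sum>u\<in>supp (g k m). \<bar>g k m u\<bar>)"
  have Gk: "Gk \<le> int (M k) - 1" using G unfolding Gk_def l1_int_def by simp
  have cv: "(\<Sum>m\<in>{1..n}. conv (\<lambda>r. c r m) (mstar (fmat M g) m k) s) = int (M k) * c s k - X"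
    unfolding X_def by (rule conv_sum[where g=g and k=k, OF k gf])
  have y: "0 \<le> y s k" "y s k < int (M k)" "0 \<le> y s k + (int (M k) * c s k - X)"
      "y s k + (int (M k) * c s k - X) < int (M k)"
  proof -
    have "0 \<le> y s k \<and> y s k < int (M k) \<and> 0 \<le> y s k + (\<Sum>m\<in>{1..n}. conv (\<lambda>r. c r m) (mstar (fmat M g) m k) s)
       \<and> y s k + (\<Sum>m\<in>{1..n}. conv (\<lambda>r. c r m) (mstar (fmat M g) m k) s) < int (M k)"
      using ok k unfolding okAt_def by blast
    then show "0 \<le> y s k" "y s k < int (M k)" "0 \<le> y s k + (int (M k) * c s k - X)"
      "y s k + (int (M k) * c s k - X) < int (M k)" unfolding cv by auto
  qed
  have "\<sigma> * X = (\<Sum>m\<in>{1..n}. \<Sum>u\<in>supp (g k m). \<sigma> * (c (s + u) m * g k m u))"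
    unfolding X_def by (simp add: sum_distrib_left)
  also have "\<dots> \<le> (\<Sum>m\<in>{1..n}. \<Sum>u\<in>supp (g k m). (int j - 1) * \<bar>g k m u\<bar>
      + \<bar>g k m u\<bar> * of_bool (c (s + u) m = \<sigma> * sgn (g k m u) * int j))"
    using cb sig by (intro sum_mono term_bound) auto
  also have "\<dots> = (int j - 1) * Gk + ?H"
    unfolding Gk_def by (simp add: sum.distrib sum_distrib_left)
  finally have sX: "\<sigma> * X \<le> (int j - 1) * Gk + ?H" .
  have "(int j - 1) * Gk \<le> (int j - 1) * (int (M k) - 1)"
    using Gk j by (intro mult_left_mono) auto
  then have sX2: "\<sigma> * X \<le> (int j - 1) * (int (M k) - 1) + ?H" using sX by linarith
  have e: "(int j - 1) * (int (M k) - 1) = int j * int (M k) - int j - int (M k) + 1"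
    by (simp add: algebra_simps)
  define PP where "PP = int j * int (M k)"
  have e2: "(int j - 1) * (int (M k) - 1) = PP - int j - int (M k) + 1" using e unfolding PP_def .
  show ?thesis
  proof (cases "\<sigma> = 1")
    case True
    then have mc: "int (M k) * c s k = PP" using cs unfolding PP_def by (simp add: mult.commute)
    have "X \<le> PP - int j - int (M k) + 1 + ?H" using sX2 e2 True by simp
    moreover note y(4)[unfolded mc]
    ultimately have "y s k < ?H" using j by linarith
    then show ?thesis using True by simp
  next
    case False
    then have s: "\<sigma> = -1" using sig by simp
    then have mc: "int (M k) * c s k = - PP" using cs unfolding PP_def by (simp add: mult.commute)
    have "- X \<le> PP - int j - int (M k) + 1 + ?H" using sX2 e2 s by simp
    moreover note y(3)[unfolded mc]
    ultimately have "int (M k) - 1 - y s k < ?H" using j by linarith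
    then show ?thesis using s by simp
  qed
qed



locale setting =
  fixes n :: nat and M :: "nat \<Rightarrow> nat" and g :: "nat \<Rightarrow> nat \<Rightarrow> 'g::group_add \<Rightarrow> int"
    and P :: "'g set" and \<nu> :: "(nat \<Rightarrow> int) pmf" and j :: nat
  assumes n_pos: "n \<ge> 1"
    and M_pos: "\<forall>k\<in>{1..n}. M k > 0"
    and g_fin: "\<forall>k\<in>{1..n}. \<forall>m\<in>{1..n}. finite (supp (g k m))"
    and M_dom: "\<forall>k\<in>{1..n}. int (M k) > (\<Sum>m\<in>{1..n}. l1_int (g k m))"
    and P_sub: "P \<subseteq> UNIV - {0}"
    and P_semigroup: "\<forall>a\<in>P. \<forall>b\<in>P. a + b \<in> P"
    and g_supp: "\<forall>k\<in>{1..n}. \<forall>m\<in>{1..n}. supp (g k m) \<subseteq> P"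
    and \<nu>_supp: "set_pmf \<nu> \<subseteq> Sf n M"
    and \<nu>_marg: "\<forall>k\<in>{1..n}. map_pmf (\<lambda>a. a k) \<nu> = pmf_of_set {0..<int (M k)}"
    and j_pos: "j \<ge> 1"
begin

definition "U = (\<Union>k\<in>{1..n}. \<Union>m\<in>{1..n}. supp (g k m))"
definition "Mb = Max (M ` {1..n})"
definition "\<rho> = (real Mb - 1) / real Mb"

lemma U_fin: "finite U" unfolding U_def using g_fin by auto
lemma U_sub: "U \<subseteq> P" unfolding U_def using g_supp by auto
lemma zP: "0 \<notin> P" using P_sub by auto
lemma S_fin: "finite (Sf n M)" unfolding Sf_def by (intro finite_PiE) auto
lemma gf: "k \<in> {1..n} \<Longrightarrow> \<forall>m\<in>{1..n}. finite (supp (g k m)) \<and> 0 \<notin> supp (g k m)"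
  using g_fin g_supp zP by blast

lemma Mb_ge: "k \<in> {1..n} \<Longrightarrow> M k \<le> Mb"
  unfolding Mb_def by (intro Max_ge) auto

lemma rho_facts: "0 \<le> \<rho>" "\<rho> < 1"
proof -
  have "1 \<in> {1..n}" using n_pos by auto
  then have "M 1 \<le> Mb" "M 1 > 0" using Mb_ge M_pos by auto
  then have "Mb \<ge> 1" by linarith
  then show "0 \<le> \<rho>" "\<rho> < 1" unfolding \<rho>_def by auto
qed

lemma G_rho:
  assumes k: "k \<in> {1..n}"
  shows "real_of_int (\<Sum>m\<in>{1..n}. l1_int (g k m)) / real (M k) \<le> \<rho>"
proof -
  have G: "real_of_int (\<Sum>m\<in>{1..n}. l1_int (g k m)) \<le> real (M k) - 1"
  proof -
    have "(\<Sum>m\<in>{1..n}. l1_int (g k m)) < int (M k)" using M_dom k by blast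
    then have "(\<Sum>m\<in>{1..n}. l1_int (g k m)) \<le> int (M k) - 1" by linarith
    then have "real_of_int (\<Sum>m\<in>{1..n}. l1_int (g k m)) \<le> real_of_int (int (M k) - 1)"
      by (simp only: of_int_le_iff)
    then show ?thesis by simp
  qed
  have Mk: "real (M k) > 0" using M_pos k by auto
  have Mb: "real (M k) \<le> real Mb" using Mb_ge[OF k] by auto
  have "real_of_int (\<Sum>m\<in>{1..n}. l1_int (g k m)) / real (M k) \<le> (real (M k) - 1) / real (M k)"
    using G Mk by (intro divide_right_mono) auto
  also have "\<dots> = 1 - 1 / real (M k)" using Mk by (simp add: field_simps)
  also have "\<dots> \<le> 1 - 1 / real Mb" using Mk Mb by (simp add: frac_le)
  also have "\<dots> = \<rho>" unfolding \<rho>_def using Mk Mb by (simp add: field_simps)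
  finally show ?thesis .
qed

lemma Exv_empty: "Exv \<nu>' S' {} h = h (\<lambda>_. undefined)"
  unfolding Exv_def by simp

lemma bound:
  "k \<in> {1..n} \<Longrightarrow> \<sigma> = 1 \<or> \<sigma> = -1 \<Longrightarrow>
    Exv \<nu> (Sf n M) (Tset U L s) (\<lambda>x. of_bool (x \<in> Bev n M (mstar (fmat M g)) U j L s k \<sigma>)) \<le> \<rho> ^ L"
proof (induction L arbitrary: s k \<sigma>)
  case 0
  then show ?case unfolding Tset.simps Exv_empty by simp
next
  case (Suc L s k \<sigma>)
  let ?F = "mstar (fmat M g)"
  let ?B = "\<lambda>L s k \<sigma>. Bev n M ?F U j L s k \<sigma>"
  let ?S = "Sf n M"
  define J' where "J' = (\<Union>u\<in>U. Tset U L (s + u))"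
  have fJ': "finite J'" unfolding J'_def using U_fin by (auto intro: Tset_finite)
  have sJ': "s \<notin> J'" unfolding J'_def using Tset_notin[OF U_sub P_semigroup zP] .
  have TJ: "Tset U (Suc L) s = insert s J'" unfolding J'_def by simp
  define H where "H w = (\<Sum>m\<in>{1..n}. \<Sum>u\<in>supp (g k m). \<bar>g k m u\<bar> * of_bool (w \<in> ?B L (s + u) m (\<sigma> * sgn (g k m u))))" for w
  define z where "z a = (if \<sigma> = 1 then a k else int (M k) - 1 - a k)" for a :: "nat \<Rightarrow> int"
  have key: "z a < H w" if wa: "w(s:=a) \<in> ?B (Suc L) s k \<sigma>" for w a
  proof -
    from wa obtain c where cb: "\<forall>t. \<forall>m\<in>{1..n}. \<bar>c t m\<bar> \<le> int j" and cs: "c s k = \<sigma> * int j"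
      and ok: "\<forall>t\<in>Tset U (Suc L) s. okAt n M ?F (w(s:=a)) c t" unfolding Bev_def by blast
    have oks: "okAt n M ?F (w(s:=a)) c s" using ok by simp
    have "(if \<sigma> = 1 then (w(s:=a)) s k else int (M k) - 1 - (w(s:=a)) s k)
      < (\<Sum>m\<in>{1..n}. \<Sum>u\<in>supp (g k m). \<bar>g k m u\<bar> * of_bool (c (s + u) m = \<sigma> * sgn (g k m u) * int j))"
      using step_ineq[OF j_pos Suc.prems(2) cb cs oks Suc.prems(1) gf[OF Suc.prems(1)]] M_dom Suc.prems(1) by blast
    then have "z a < (\<Sum>m\<in>{1..n}. \<Sum>u\<in>supp (g k m). \<bar>g k m u\<bar> * of_bool (c (s + u) m = \<sigma> * sgn (g k m u) * int j))"
      unfolding z_def by (simp only: fun_upd_same)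
    also have "\<dots> \<le> H w" unfolding H_def
    proof (intro sum_mono mult_left_mono)
      fix m u assume m: "m \<in> {1..n}" and u: "u \<in> supp (g k m)"
      show "of_bool (c (s + u) m = \<sigma> * sgn (g k m u) * int j) \<le> (of_bool (w \<in> ?B L (s + u) m (\<sigma> * sgn (g k m u))) :: int)"
      proof (cases "c (s + u) m = \<sigma> * sgn (g k m u) * int j")
        case True
        have uU: "u \<in> U" unfolding U_def using Suc.prems(1) m u by blast
        have sub: "Tset U L (s + u) \<subseteq> Tset U (Suc L) s" using uU by auto
        have "w(s:=a) \<in> ?B L (s + u) m (\<sigma> * sgn (g k m u))"
          unfolding Bev_def using cb True ok sub by blast
        moreover have "\<forall>t\<in>Tset U L (s + u). (w(s:=a)) t = w t"
          using sJ' uU unfolding J'_def by auto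
        ultimately have "w \<in> ?B L (s + u) m (\<sigma> * sgn (g k m u))"
          using Bev_dep by blast
        then show ?thesis by simp
      qed simp
    qed simp
    finally show ?thesis .
  qed
  have Hnn: "H w \<ge> 0" for w unfolding H_def by (intro sum_nonneg) auto
  have Mk: "M k > 0" using M_pos Suc.prems(1) by auto
  have "Exv \<nu> ?S (Tset U (Suc L) s) (\<lambda>x. of_bool (x \<in> ?B (Suc L) s k \<sigma>))
      = Exv \<nu> ?S J' (\<lambda>w. \<Sum>a\<in>?S. pmf \<nu> a * of_bool (w(s:=a) \<in> ?B (Suc L) s k \<sigma>))"
    unfolding TJ by (rule Ex_insert[OF fJ' sJ'])
  also have "\<dots> \<le> Exv \<nu> ?S J' (\<lambda>w. \<Sum>a\<in>?S. pmf \<nu> a * of_bool (z a < H w))"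
  proof (intro Ex_mono sum_mono mult_left_mono)
    fix w a
    show "(of_bool (w(s:=a) \<in> ?B (Suc L) s k \<sigma>) :: real) \<le> of_bool (z a < H w)"
      using key[of w a] by auto
  qed simp
  also have "\<dots> \<le> Exv \<nu> ?S J' (\<lambda>w. real_of_int (H w) / real (M k))"
  proof (intro Ex_mono)
    fix w
    have "(\<Sum>a\<in>?S. pmf \<nu> a * of_bool ((\<lambda>x. (if \<sigma> = 1 then x else int (M k) - 1 - x) < H w) (a k)))
       \<le> real_of_int (H w) / real (M k)"
      by (rule marg_bound[OF S_fin \<nu>_supp]) (use \<nu>_marg Suc.prems Mk Hnn in auto)
    then show "(\<Sum>a\<in>?S. pmf \<nu> a * of_bool (z a < H w)) \<le> real_of_int (H w) / real (M k)"
      unfolding z_def by (simp add: if_distrib cong: if_cong)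
  qed
  also have "\<dots> = (\<Sum>m\<in>{1..n}. \<Sum>u\<in>supp (g k m). (real_of_int \<bar>g k m u\<bar> / real (M k)) *
        Exv \<nu> ?S J' (\<lambda>w. of_bool (w \<in> ?B L (s + u) m (\<sigma> * sgn (g k m u)))))"
  proof -
    have eq: "(\<lambda>w. real_of_int (H w) / real (M k)) = (\<lambda>w. \<Sum>m\<in>{1..n}. \<Sum>u\<in>supp (g k m).
        (real_of_int \<bar>g k m u\<bar> / real (M k)) * of_bool (w \<in> ?B L (s + u) m (\<sigma> * sgn (g k m u))))"
      unfolding H_def by (simp add: sum_divide_distrib)
    show ?thesis by (simp only: eq Ex_sum Ex_cmult)
  qed
  also have "\<dots> \<le> (\<Sum>m\<in>{1..n}. \<Sum>u\<in>supp (g k m). (real_of_int \<bar>g k m u\<bar> / real (M k)) * \<rho> ^ L)"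
  proof (intro sum_mono mult_left_mono)
    fix m u assume m: "m \<in> {1..n}" and u: "u \<in> supp (g k m)"
    have uU: "u \<in> U" unfolding U_def using Suc.prems(1) m u by blast
    have sub: "Tset U L (s + u) \<subseteq> J'" unfolding J'_def using uU by auto
    have "Exv \<nu> ?S J' (\<lambda>w. of_bool (w \<in> ?B L (s + u) m (\<sigma> * sgn (g k m u))))
        = Exv \<nu> ?S (Tset U L (s + u)) (\<lambda>w. of_bool (w \<in> ?B L (s + u) m (\<sigma> * sgn (g k m u))))"
    proof (rule Ex_marg[OF fJ' sub S_fin \<nu>_supp])
      fix x x' :: "'g \<Rightarrow> nat \<Rightarrow> int"
      assume "\<forall>i\<in>Tset U L (s + u). x i = x' i"
      then have "x \<in> ?B L (s + u) m (\<sigma> * sgn (g k m u)) \<longleftrightarrow> x' \<in> ?B L (s + u) m (\<sigma> * sgn (g k m u))"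
        by (rule Bev_dep)
      then show "(of_bool (x \<in> ?B L (s + u) m (\<sigma> * sgn (g k m u))) :: real) = of_bool (x' \<in> ?B L (s + u) m (\<sigma> * sgn (g k m u)))"
        by simp
    qed
    also have "\<dots> \<le> \<rho> ^ L"
    proof (rule Suc.IH)
      show "m \<in> {1..n}" by (rule m)
      have "g k m u \<noteq> 0" using u by (simp add: supp_def)
      then show "\<sigma> * sgn (g k m u) = 1 \<or> \<sigma> * sgn (g k m u) = -1"
        using Suc.prems(2) by (auto simp: sgn_if)
    qed
    finally show "Exv \<nu> ?S J' (\<lambda>w. of_bool (w \<in> ?B L (s + u) m (\<sigma> * sgn (g k m u)))) \<le> \<rho> ^ L" .
  qed simp
  also have "\<dots> = real_of_int (\<Sum>m\<in>{1..n}. l1_int (g k m)) / real (M k) * \<rho> ^ L"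
    by (simp add: l1_int_def sum_divide_distrib sum_distrib_right)
  also have "\<dots> \<le> \<rho> * \<rho> ^ L"
    using G_rho[OF Suc.prems(1)] rho_facts by (intro mult_right_mono) auto
  finally show ?case by simp
qed

end



lemma measure_link:
  fixes \<nu> :: "'b pmf" and E J :: "'i set" and S :: "'b set" and X
  assumes J: "finite J" "J \<subseteq> E" and X: "X \<subseteq> PiE J (\<lambda>_. S)" and S: "finite S"
  shows "{y \<in> space (PiM E (\<lambda>_. measure_pmf \<nu>)). restrict y J \<in> X} \<in> sets (PiM E (\<lambda>_. measure_pmf \<nu>))"
    and "measure (PiM E (\<lambda>_. measure_pmf \<nu>)) {y \<in> space (PiM E (\<lambda>_. measure_pmf \<nu>)). restrict y J \<in> X}
       = (\<Sum>x\<in>X. \<Prod>i\<in>J. pmf \<nu> (x i))"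
proof -
  interpret product_prob_space "\<lambda>_. measure_pmf \<nu>" E
    by unfold_locales (simp_all add: prob_space_measure_pmf measure_pmf.sigma_finite_measure_axioms)
  have fX: "finite X" using X finite_PiE[OF J(1), of "\<lambda>_. S"] S finite_subset by blast
  define A where "A x = prod_emb E (\<lambda>_. measure_pmf \<nu>) J (PiE J (\<lambda>i. {x i}))" for x
  have memA: "y \<in> A x \<longleftrightarrow> y \<in> space (PiM E (\<lambda>_. measure_pmf \<nu>)) \<and> restrict y J = x"
    if x: "x \<in> X" for x y
  proof -
    have xe: "x \<in> extensional J" using x X by (auto simp: PiE_def)
    have "restrict y J \<in> PiE J (\<lambda>i. {x i}) \<longleftrightarrow> restrict y J = x"
    proof
      assume h: "restrict y J \<in> PiE J (\<lambda>i. {x i})"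
      show "restrict y J = x"
      proof
        fix i show "restrict y J i = x i"
        proof (cases "i \<in> J")
          case True then show ?thesis using PiE_mem[OF h True] by simp
        next
          case False then show ?thesis using xe by (simp add: extensional_def)
        qed
      qed
    next
      assume "restrict y J = x"
      then show "restrict y J \<in> PiE J (\<lambda>i. {x i})" by auto
    qed
    then show ?thesis unfolding A_def prod_emb_def space_PiM by auto
  qed
  have eq: "{y \<in> space (PiM E (\<lambda>_. measure_pmf \<nu>)). restrict y J \<in> X} = (\<Union>x\<in>X. A x)"
    using memA by auto
  have Asets: "A x \<in> sets (PiM E (\<lambda>_. measure_pmf \<nu>))" for x
    unfolding A_def using J by (intro sets_PiM_I) auto
  show "{y \<in> space (PiM E (\<lambda>_. measure_pmf \<nu>)). restrict y J \<in> X} \<in> sets (PiM E (\<lambda>_. measure_pmf \<nu>))"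
    unfolding eq using fX Asets by auto
  have disj: "disjoint_family_on A X"
    unfolding disjoint_family_on_def using memA by auto
  have "measure (PiM E (\<lambda>_. measure_pmf \<nu>)) (\<Union>x\<in>X. A x) = (\<Sum>x\<in>X. measure (PiM E (\<lambda>_. measure_pmf \<nu>)) (A x))"
    using fX Asets disj by (intro measure_finite_Union) (auto simp: P.emeasure_finite)
  also have "\<dots> = (\<Sum>x\<in>X. \<Prod>i\<in>J. pmf \<nu> (x i))"
  proof (intro sum.cong refl)
    fix x assume "x \<in> X"
    show "measure (PiM E (\<lambda>_. measure_pmf \<nu>)) (A x) = (\<Prod>i\<in>J. pmf \<nu> (x i))"
      unfolding A_def using J by (subst measure_PiM_emb) (auto simp: measure_pmf_single)
  qed
  finally show "measure (PiM E (\<lambda>_. measure_pmf \<nu>)) {y \<in> space (PiM E (\<lambda>_. measure_pmf \<nu>)). restrict y J \<in> X}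
       = (\<Sum>x\<in>X. \<Prod>i\<in>J. pmf \<nu> (x i))" unfolding eq .
qed

context setting
begin

lemma proj_zero:
  assumes k: "k \<in> {1..n}" and sig: "\<sigma> = 1 \<or> \<sigma> = -1"
    and Zs: "\<And>y c. (y, c) \<in> Z \<Longrightarrow> y \<in> Yset n M \<and> c \<in> Vset n N \<and> shift_act n (mstar (fmat M g)) y c \<in> Yset n M
        \<and> cmax n c = int j \<and> c s k = \<sigma> * int j"
  shows "projmeas \<nu> (sPbar s P) Z = 0"
proof -
  let ?E = "sPbar s P"
  let ?Q = "PiM ?E (\<lambda>_. measure_pmf \<nu>)"
  let ?I = "(\<lambda>y. restrict y ?E) ` (fst ` Z)"
  interpret Q: prob_space ?Q
    by (intro prob_space_PiM) (simp add: prob_space_measure_pmf)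
  have inB: "y \<in> Bev n M (mstar (fmat M g)) U j L s k \<sigma>" and inS: "\<forall>t. y t \<in> Sf n M"
    if "y \<in> fst ` Z" for y L
  proof -
    from that obtain c where yc: "(y, c) \<in> Z" by force
    have Y: "y \<in> Yset n M" and V: "c \<in> Vset n N" and Y': "shift_act n (mstar (fmat M g)) y c \<in> Yset n M"
      and cm: "cmax n c = int j" and cs: "c s k = \<sigma> * int j" using Zs[OF yc] by auto
    show "\<forall>t. y t \<in> Sf n M" using Y by (simp add: Yset_def)
    have cN: "\<bar>c t m\<bar> \<le> int N" if "m \<in> {1..n}" for t m
    proof -
      have "c t \<in> PiE {1..n} (\<lambda>_. {- int N..int N})" using V by (simp add: Vset_def)
      then have "c t m \<in> {- int N..int N}" using PiE_mem that by blast
      then show ?thesis by auto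
    qed
    have fin: "finite {\<bar>c t m\<bar> | t m. m \<in> {1..n}}"
      by (rule finite_subset[of _ "{0..int N}"]) (use cN in auto)
    have cb: "\<forall>t. \<forall>m\<in>{1..n}. \<bar>c t m\<bar> \<le> int j"
    proof (intro allI ballI)
      fix t m assume "m \<in> {1..n}"
      then have "\<bar>c t m\<bar> \<le> cmax n c" unfolding cmax_def using fin by (intro Max_ge) auto
      then show "\<bar>c t m\<bar> \<le> int j" using cm by simp
    qed
    have ok: "okAt n M (mstar (fmat M g)) y c t" for t
    proof -
      have a: "y t \<in> Sf n M" using Y by (simp add: Yset_def)
      have b: "shift_act n (mstar (fmat M g)) y c t \<in> Sf n M" using Y' by (simp add: Yset_def)
      show ?thesis unfolding okAt_def
      proof
        fix m assume m: "m \<in> {1..n}"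
        have "y t m \<in> {0..<int (M m)}" using a m by (auto simp: Sf_def PiE_iff)
        moreover have "shift_act n (mstar (fmat M g)) y c t m \<in> {0..<int (M m)}"
          using b m by (auto simp: Sf_def PiE_iff)
        ultimately show "0 \<le> y t m \<and> y t m < int (M m)
            \<and> 0 \<le> y t m + (\<Sum>k\<in>{1..n}. conv (\<lambda>r. c r k) (mstar (fmat M g) k m) t)
            \<and> y t m + (\<Sum>k\<in>{1..n}. conv (\<lambda>r. c r k) (mstar (fmat M g) k m) t) < int (M m)"
          using m by (simp add: shift_act_def)
      qed
    qed
    show "y \<in> Bev n M (mstar (fmat M g)) U j L s k \<sigma>"
      unfolding Bev_def using cb cs ok by blast
  qed
  have bnd: "measure ?Q ?I \<le> \<rho> ^ L" for L
  proof -
    let ?T = "Tset U L s"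
    let ?X = "{x \<in> PiE ?T (\<lambda>_. Sf n M). x \<in> Bev n M (mstar (fmat M g)) U j L s k \<sigma>}"
    have fT: "finite ?T" using U_fin by (rule Tset_finite)
    have TE: "?T \<subseteq> ?E" using Tset_sub[OF U_sub P_semigroup, of L s] unfolding sPbar_def by auto
    have sub: "?I \<subseteq> {y \<in> space ?Q. restrict y ?T \<in> ?X}"
    proof
      fix x assume "x \<in> ?I"
      then obtain y where y: "y \<in> fst ` Z" and x: "x = restrict y ?E" by blast
      have sp: "x \<in> space ?Q" unfolding x space_PiM by auto
      have rx: "restrict x ?T = restrict y ?T" unfolding x using TE by (simp add: Int_absorb1)
      have a: "restrict y ?T \<in> PiE ?T (\<lambda>_. Sf n M)" using inS[OF y] by auto
      have b: "restrict y ?T \<in> Bev n M (mstar (fmat M g)) U j L s k \<sigma>"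
        using inB[OF y] Bev_dep[of U L s "restrict y ?T" y] by auto
      have "restrict x ?T \<in> ?X" unfolding rx using a b by blast
      then show "x \<in> {y \<in> space ?Q. restrict y ?T \<in> ?X}" using sp by blast
    qed
    have XS: "?X \<subseteq> PiE ?T (\<lambda>_. Sf n M)" by auto
    have "measure ?Q ?I \<le> measure ?Q {y \<in> space ?Q. restrict y ?T \<in> ?X}"
      by (rule Q.finite_measure_mono[OF sub measure_link(1)[OF fT TE XS S_fin]])
    also have "\<dots> = (\<Sum>x\<in>?X. \<Prod>i\<in>?T. pmf \<nu> (x i))"
      by (rule measure_link(2)[OF fT TE XS S_fin])
    also have "\<dots> = Exv \<nu> (Sf n M) ?T (\<lambda>x. of_bool (x \<in> Bev n M (mstar (fmat M g)) U j L s k \<sigma>))"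
      unfolding Exv_def using fT S_fin
      by (subst sum.inter_filter) (auto intro!: sum.cong finite_PiE)
    also have "\<dots> \<le> \<rho> ^ L" by (rule bound[OF k sig])
    finally show ?thesis .
  qed
  have "measure ?Q ?I \<le> 0"
  proof (rule ccontr)
    assume "\<not> measure ?Q ?I \<le> 0"
    then have "measure ?Q ?I > 0" by simp
    then obtain L where "\<rho> ^ L < measure ?Q ?I" using real_arch_pow_inv rho_facts(2) by blast
    then show False using bnd[of L] by simp
  qed
  moreover have "measure ?Q ?I \<ge> 0" by (rule measure_nonneg)
  ultimately have "measure ?Q ?I = 0" by linarith
  then show ?thesis unfolding projmeas_def nuE_def .
qed

end


theorem lemma4p3:
  fixes n N :: nat
    and M :: "nat \<Rightarrow> nat"
    and g :: "nat \<Rightarrow> nat \<Rightarrow> 'g::{group_add,countable} \<Rightarrow> int"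
    and P :: "'g set"
    and Finv :: "nat \<Rightarrow> nat \<Rightarrow> 'g \<Rightarrow> real"
    and \<nu> :: "(nat \<Rightarrow> int) pmf"
  assumes inf_G: "infinite (UNIV :: 'g set)"
    and n_pos: "n \<ge> 1"
    and M_pos: "\<forall>k\<in>{1..n}. M k > 0"
    and g_fin: "\<forall>k\<in>{1..n}. \<forall>m\<in>{1..n}. finite (supp (g k m))"
    and M_dom: "\<forall>k\<in>{1..n}. int (M k) > (\<Sum>m\<in>{1..n}. l1_int (g k m))"
    and P_sub: "P \<subseteq> UNIV - {0}"
    and P_semigroup: "\<forall>a\<in>P. \<forall>b\<in>P. a + b \<in> P"
    and g_supp: "\<forall>k\<in>{1..n}. \<forall>m\<in>{1..n}. supp (g k m) \<subseteq> P"
    and Finv_inv: "is_l1_inverse n Finv (mstar (fmat M g))"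
    and \<nu>_supp: "set_pmf \<nu> \<subseteq> Sf n M"
    and \<nu>_marg: "\<forall>k\<in>{1..n}. map_pmf (\<lambda>a. a k) \<nu> = pmf_of_set {0..<int (M k)}"
    and N_bound: "real N \<ge> real (Max (M ` {1..n})) * norm_1inf n Finv"
  shows "\<forall>j\<in>{1..N}. \<forall>s::'g.
           pj n M N (fmat M g) P \<nu> j s
             \<le> (real (Max (M ` {1..n})) - 1) / real (Max (M ` {1..n}))
                * pj n M N (fmat M g) P \<nu> j s"
proof (intro ballI allI)
  fix j s assume j: "j \<in> {1..N}"
  interpret setting n M g P \<nu> j
    using n_pos M_pos g_fin M_dom P_sub P_semigroup g_supp \<nu>_supp \<nu>_marg j by unfold_locales auto
  have zp: "projmeas \<nu> (sPbar s P) (Zplus n M N (fmat M g) j s k) = 0" if k: "k \<in> {1..n}" for k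
    by (rule proj_zero[OF k, of 1]) (auto simp: Zplus_def Zset_def)
  have zm: "projmeas \<nu> (sPbar s P) (Zminus n M N (fmat M g) j s k) = 0" if k: "k \<in> {1..n}" for k
  proof (rule proj_zero[OF k, of "-1"])
    fix y c assume "(y, c) \<in> Zminus n M N (fmat M g) j s k"
    then show "y \<in> Yset n M \<and> c \<in> Vset n N \<and> shift_act n (mstar (fmat M g)) y c \<in> Yset n M
        \<and> cmax n c = int j \<and> c s k = - 1 * int j"
      by (auto simp: Zminus_def Zset_def)
  qed simp
  have "pj n M N (fmat M g) P \<nu> j s = 0"
  proof -
    have one: "1 \<in> {1..n}" using n_pos by auto
    have "{projmeas \<nu> (sPbar s P) (Zplus n M N (fmat M g) j s k) | k. k \<in> {1..n}}
        \<union> {projmeas \<nu> (sPbar s P) (Zminus n M N (fmat M g) j s k) | k. k \<in> {1..n}} = {0}"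
    proof (intro equalityI subsetI)
      fix x assume "x \<in> {projmeas \<nu> (sPbar s P) (Zplus n M N (fmat M g) j s k) | k. k \<in> {1..n}}
        \<union> {projmeas \<nu> (sPbar s P) (Zminus n M N (fmat M g) j s k) | k. k \<in> {1..n}}"
      then show "x \<in> {0}" using zp zm by auto
    next
      fix x :: real assume "x \<in> {0}"
      then have x: "x = projmeas \<nu> (sPbar s P) (Zplus n M N (fmat M g) j s 1)" using zp[OF one] by simp
      show "x \<in> {projmeas \<nu> (sPbar s P) (Zplus n M N (fmat M g) j s k) | k. k \<in> {1..n}}
        \<union> {projmeas \<nu> (sPbar s P) (Zminus n M N (fmat M g) j s k) | k. k \<in> {1..n}}"
        unfolding x using one by blast
    qed
    then show ?thesis unfolding pj_def by simp
  qed
  then show "pj n M N (fmat M g) P \<nu> j s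
             \<le> (real (Max (M ` {1..n})) - 1) / real (Max (M ` {1..n}))
                * pj n M N (fmat M g) P \<nu> j s" by simp
qed

end
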